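(* Let $A$ be a finite set and $p : A \to [0,1]$. Let $\{X_i(u)\}_{i \ge 1, u \in A}$ be independent random variables with $X_i(u) \sim \mathrm{Bernoulli}(p(u))$. For $n \ge 1$ define $U_n(u) := \mathds{1}\{\sum_{i=1}^n X_i(u) = 1\}$, $Z_n(u) := \mathds{1}\{X_1(u) = \cdots = X_n(u) = 0\}$, $R_n := \sum_{u \in A} Z_n(u)\, p(u)$, $\hat R_n := \frac{1}{n}\sum_{u \in A} U_n(u)$, and $\lambda := \sum_{u \in A} p(u)$. For $\delta \in (0,1)$ let \[ \beta_n := \left(1+\sqrt{2}\right)\sqrt{\frac{\lambda \log(4/\delta)}{n}} + \frac{1}{3n}\log\frac{4}{\delta}. \] Then with probability at least $1-\delta$, \[ -\beta_n - \frac{\lambda}{n} \le R_n - \hat R_n \le \beta_n . \]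
   Context: Model: a single influencer is connected to a finite set $A$ of basic nodes; at each selection $i$ of the influencer, each node $u\in A$ is activated ($X_i(u)=1$) independently with probability $p(u)$, independently across selections. $R_n$ is the remaining potential (expected number of new activations at the next selection) and $\hat R_n$ is the Good-Turing estimator (proportion of hapaxes). *)

theory Defs
  imports "HOL-Probability.Probability"
begin

definition hapax :: "(nat \<Rightarrow> 'a \<Rightarrow> 'w \<Rightarrow> bool) \<Rightarrow> nat \<Rightarrow> 'a \<Rightarrow> 'w \<Rightarrow> real" where
  "hapax X n u \<omega> = of_bool ((\<Sum>i=1..n. of_bool (X i u \<omega>) :: nat) = 1)"

definition unseen :: "(nat \<Rightarrow> 'a \<Rightarrow> 'w \<Rightarrow> bool) \<Rightarrow> nat \<Rightarrow> 'a \<Rightarrow> 'w \<Rightarrow> real" where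
  "unseen X n u \<omega> = of_bool (\<forall>i\<in>{1..n}. \<not> X i u \<omega>)"

definition remaining :: "'a set \<Rightarrow> ('a \<Rightarrow> real) \<Rightarrow> (nat \<Rightarrow> 'a \<Rightarrow> 'w \<Rightarrow> bool) \<Rightarrow> nat \<Rightarrow> 'w \<Rightarrow> real" where
  "remaining A p X n \<omega> = (\<Sum>u\<in>A. unseen X n u \<omega> * p u)"

definition good_turing :: "'a set \<Rightarrow> (nat \<Rightarrow> 'a \<Rightarrow> 'w \<Rightarrow> bool) \<Rightarrow> nat \<Rightarrow> 'w \<Rightarrow> real" where
  "good_turing A X n \<omega> = (1 / real n) * (\<Sum>u\<in>A. hapax X n u \<omega>)"

definition beta_n :: "real \<Rightarrow> real \<Rightarrow> nat \<Rightarrow> real" where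
  "beta_n lam \<delta> n = (1 + sqrt 2) * sqrt (lam * ln (4 / \<delta>) / real n) + ln (4 / \<delta>) / (3 * real n)"

end

theory Submission
  imports Defs
begin


lemma mono0:
  fixes f f' :: "real \<Rightarrow> real"
  assumes "\<And>t. (f has_real_derivative f' t) (at t)" "\<And>t. t \<ge> 0 \<Longrightarrow> f' t \<ge> 0" "y \<ge> 0"
  shows "f 0 \<le> f y"
  using assms by (intro DERIV_nonneg_imp_nondecreasing[of 0 y f]) auto

lemma exp_neg_upper2:
  fixes y :: real assumes "y \<ge> 0"
  shows "exp (-y) \<le> 1 - y + y^2/2"
proof -
  have "(\<lambda>t. 1 - t + t^2/2 - exp(-t)) 0 \<le> (\<lambda>t. 1 - t + t^2/2 - exp(-t)) y"
  proof (rule mono0[where f' = "\<lambda>t. -1 + t + exp(-t)"])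
    show "((\<lambda>t. 1 - t + t^2/2 - exp(-t)) has_real_derivative -1 + t + exp (- t)) (at t)" for t :: real
      by (auto intro!: derivative_eq_intros)
    show "0 \<le> -1 + t + exp(-t)" for t :: real using exp_minus_ge[of t] by simp
  qed fact
  thus ?thesis by simp
qed

lemma k_P4:
  fixes x :: real assumes "x \<ge> 0"
  shows "1 - (1+x) * exp(-x) \<le> x^2/2 - x^3/3 + x^4/8"
proof -
  have "(\<lambda>t. t^2/2 - t^3/3 + t^4/8 - 1 + (1+t)*exp(-t)) 0 \<le> (\<lambda>t. t^2/2 - t^3/3 + t^4/8 - 1 + (1+t)*exp(-t)) x"
  proof (rule mono0[where f' = "\<lambda>t. t * (1 - t + t^2/2 - exp(-t))"])
    show "((\<lambda>t. t^2/2 - t^3/3 + t^4/8 - 1 + (1+t)*exp(-t)) has_real_derivative t * (1 - t + t^2/2 - exp(-t))) (at t)" for t :: real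
      by (auto intro!: derivative_eq_intros simp: algebra_simps power2_eq_square power3_eq_cube eval_nat_numeral)
    show "0 \<le> t * (1 - t + t^2/2 - exp(-t))" if "t \<ge> 0" for t :: real
      using exp_neg_upper2[OF that] that by simp
  qed fact
  thus ?thesis by simp
qed

lemma bern_aux:
  fixes y :: real assumes "y \<ge> 0"
  shows "(1 - y/3) * (exp y - 1 - y) \<le> y^2/2"
proof -
  have h2: "0 \<le> 1 - exp t + t * exp t" if "t \<ge> 0" for t :: real
  proof -
    have "(\<lambda>t. 1 - exp t + t * exp t) 0 \<le> (\<lambda>t. 1 - exp t + t * exp t) t"
      by (rule mono0[where f' = "\<lambda>t. t * exp t"]) (auto intro!: derivative_eq_intros that)
    thus ?thesis by simp
  qed
  have h1: "0 \<le> t + 2 - 2 * exp t + t * exp t" if "t \<ge> 0" for t :: real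
  proof -
    have "(\<lambda>t. t + 2 - 2 * exp t + t * exp t) 0 \<le> (\<lambda>t. t + 2 - 2 * exp t + t * exp t) t"
      by (rule mono0[where f' = "\<lambda>t. 1 - exp t + t * exp t"]) (auto intro!: derivative_eq_intros that h2)
    thus ?thesis by simp
  qed
  have "(\<lambda>t. t^2/2 - (1 - t/3) * (exp t - 1 - t)) 0 \<le> (\<lambda>t. t^2/2 - (1 - t/3) * (exp t - 1 - t)) y"
  proof (rule mono0[where f' = "\<lambda>t. (t + 2 - 2 * exp t + t * exp t)/3"])
    show "((\<lambda>t. t^2/2 - (1 - t/3) * (exp t - 1 - t)) has_real_derivative (t + 2 - 2 * exp t + t * exp t)/3) (at t)" for t :: real
      by (auto intro!: derivative_eq_intros simp: field_simps)
    show "0 \<le> (t + 2 - 2 * exp t + t * exp t)/3" if "t \<ge> 0" for t :: real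
      using h1[OF that] by simp
  qed (rule assms)
  thus ?thesis by simp
qed

lemma kint:
  fixes x a b :: real
  assumes "0 \<le> a" "a \<le> x" "x \<le> b" "b \<le> 32" "1 - (1+a) * (1 - b/32)^32 \<le> 3*a/8"
  shows "1 - (1+x) * exp(-x) \<le> 3*x/8"
proof -
  have "(1 - b/32)^32 \<le> exp (-b)"
    using exp_ge_one_minus_x_over_n_power_n[of b 32] assms by simp
  also have "exp (-b) \<le> exp (-x)" using assms by simp
  finally have e: "(1 - b/32)^32 \<le> exp (-x)" .
  have "(1+a) * (1 - b/32)^32 \<le> (1+x) * exp(-x)"
    by (rule mult_mono) (use assms e in auto)
  thus ?thesis using assms by linarith
qed

lemma k_38:
  fixes x :: real assumes "x \<ge> 3/2"
  shows "1 - (1+x) * exp(-x) \<le> 3*x/8"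
proof -
  consider "x \<le> 8/5" | "8/5 \<le> x" "x \<le> 7/4" | "7/4 \<le> x" "x \<le> 39/20" | "39/20 \<le> x" "x \<le> 11/5"
    | "11/5 \<le> x" "x \<le> 5/2" | "5/2 \<le> x" "x \<le> 27/10" | "27/10 \<le> x" by linarith
  then show ?thesis
  proof cases
    case 1 then show ?thesis using assms by (intro kint[of "3/2" x "8/5"]) (simp_all add: power_divide)
  next
    case 2 then show ?thesis by (intro kint[of "8/5" x "7/4"]) (simp_all add: power_divide)
  next
    case 3 then show ?thesis by (intro kint[of "7/4" x "39/20"]) (simp_all add: power_divide)
  next
    case 4 then show ?thesis by (intro kint[of "39/20" x "11/5"]) (simp_all add: power_divide)
  next
    case 5 then show ?thesis by (intro kint[of "11/5" x "5/2"]) (simp_all add: power_divide)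
  next
    case 6 then show ?thesis by (intro kint[of "5/2" x "27/10"]) (simp_all add: power_divide)
  next
    case 7
    have "0 \<le> (1+x) * exp(-x)" using 7 by simp
    then show ?thesis using 7 by linarith
  qed
qed

lemma ln2_lt1: "ln (2::real) < 1"
proof -
  have "(1 + 1 / real 2)^2 \<le> exp (1::real)"
    by (rule exp_ge_one_plus_x_over_n_power_n) auto
  hence "2 < exp (1::real)" by (simp add: power2_eq_square) 
  thus ?thesis using ln_less_cancel_iff[of 2 "exp 1"] by simp
qed

lemma e_ge_94: "9/4 \<le> exp (1::real)"
proof -
  have "(1 + 1 / real 2)^2 \<le> exp (1::real)"
    by (rule exp_ge_one_plus_x_over_n_power_n) auto
  thus ?thesis by (simp add: power2_eq_square)
qed

lemma exp_ge_e_mult: "exp (1::real) * d \<le> exp d"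
proof -
  have "d \<le> exp (d - 1)" using exp_ge_add_one_self[of "d-1"] by simp
  hence "exp 1 * d \<le> exp 1 * exp (d - 1)" by simp
  also have "\<dots> = exp d" by (simp flip: exp_add)
  finally show ?thesis .
qed

lemma pow_le_exp: 
  fixes p :: real assumes "0 \<le> p" "p \<le> 1"
  shows "(1-p)^n \<le> exp (- (real n * p))"
proof -
  have "(1-p)^n \<le> exp (-p)^n"
    by (rule power_mono) (use exp_minus_ge[of p] assms in auto)
  also have "\<dots> = exp (- (real n * p))" by (simp add: exp_of_nat_mult[symmetric])
  finally show ?thesis .
qed

lemma T1_real:
  fixes p s :: real and n :: nat
  assumes p: "0 \<le> p" "p \<le> 1" and n: "n \<ge> 1" and s: "0 \<le> s" "s < 3 * real n"
  shows "(1 - (1-p)^n + (1-p)^n * exp (s*p)) * exp (-(s*p*(1-p)^n))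
           \<le> exp ((p / (2*real n)) * s^2 / (2 * (1 - (1/(3*real n)) * s)))"
proof (cases "p = 0")
  case True then show ?thesis by simp
next
  case False
  hence p0: "p > 0" using p by simp
  define q where "q = (1-p)^n"
  define m where "m = real n * p"
  define x where "x = s * p"
  define D where "D = 4*m - 4*x/3"
  have n0: "real n > 0" using n by simp
  have m0: "m > 0" using p0 n0 by (simp add: m_def)
  have x0: "x \<ge> 0" using s p by (simp add: x_def)
  have xm: "x < 3*m" using s p0 by (simp add: x_def m_def)
  have D0: "D > 0" using xm by (simp add: D_def)
  have q0: "q \<ge> 0" "q \<le> 1" using p by (auto simp: q_def power_le_one)
  have qm: "q \<le> exp (-m)" using pow_le_exp[OF p, of n] by (simp add: q_def m_def)
  have expo: "(p / (2*real n)) * s^2 / (2 * (1 - (1/(3*real n)) * s)) = x^2 / D"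
  proof -
    have "1 - (1/(3*real n)) * s > 0" using s n0 by (simp add: field_simps)
    thus ?thesis using n0 p0 unfolding D_def x_def m_def
      by (simp add: field_simps power2_eq_square)
  qed
  have lhs: "(1 - (1-p)^n + (1-p)^n * exp (s*p)) * exp (-(s*p*(1-p)^n)) = (1 + q * (exp x - 1)) * exp (- (x * q))"
    by (simp add: q_def x_def algebra_simps)
  have pos1: "1 + q * (exp x - 1) > 0" using q0 x0 by (simp add: add_pos_nonneg)
  show ?thesis
  proof (cases "D \<le> 8")
    case True
    have H: "- x * q + ln (1 + q * (exp x - 1)) \<le> x^2 / 8"
      using Hoeffdings_lemma_aux[of x q] x0 q0 by simp
    have "(1 + q * (exp x - 1)) * exp (- (x * q)) = exp (- x * q + ln (1 + q * (exp x - 1)))"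
      using pos1 by (simp add: exp_diff exp_minus field_simps)
    also have "\<dots> \<le> exp (x^2 / 8)" using H by simp
    also have "x^2/8 \<le> x^2 / D" using True D0 by (intro divide_left_mono) auto
    finally show ?thesis using lhs expo by simp
  next
    case False
    hence D8: "D > 8" by simp
    show ?thesis
    proof (cases "x \<le> m")
      case True
      define d where "d = m - x"
      define k where "k = 1 - (1+x) * exp (-x)"
      have d0: "d \<ge> 0" using True by (simp add: d_def)
      have "(1 + q * (exp x - 1)) * exp (- (x * q)) \<le> exp (q * (exp x - 1)) * exp (- (x * q))"
        using exp_ge_add_one_self[of "q * (exp x - 1)"] by (intro mult_right_mono) auto
      also have "\<dots> = exp (q * (exp x - 1 - x))" by (simp flip: exp_add add: algebra_simps)
      also have "\<dots> \<le> exp (exp (-m) * (exp x - 1 - x))"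
      proof -
        have "0 \<le> exp x - 1 - x" using exp_ge_add_one_self[of x] by linarith
        hence "q * (exp x - 1 - x) \<le> exp (-m) * (exp x - 1 - x)" by (rule mult_right_mono[OF qm])
        thus ?thesis by simp
      qed
      also have "exp (-m) * (exp x - 1 - x) = exp (-d) * k"
      proof -
        have e1: "exp (-m) = exp (-d) * exp (-x)" by (simp add: d_def flip: exp_add)
        have e2: "exp (-x) * exp x = 1" by (simp flip: exp_add)
        have "exp (-m) * (exp x - 1 - x) = exp (-d) * (exp (-x) * exp x - (1+x) * exp (-x))"
          unfolding e1 by (simp add: algebra_simps)
        thus ?thesis unfolding e2 k_def .
      qed
      also have "exp (-d) * k \<le> x^2 / D"
      proof -
        have DD: "D = 8*x/3 + 4*d" by (simp add: D_def d_def)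
        have "k * D \<le> x^2 * exp d"
        proof (cases "x \<le> 3/2")
          case True
          have d1: "d \<ge> 1" using D8 True DD by linarith
          have kP: "k \<le> x^2 * (1/2 - x/3 + x^2/8)"
            using k_P4[OF x0] by (simp add: k_def power2_eq_square power3_eq_cube eval_nat_numeral algebra_simps)
          have Pn: "0 \<le> 1/2 - x/3 + x^2/8"
          proof -
            have "1/2 - x/3 + x^2/8 = (x - 4/3)^2/8 + 5/18" by (simp add: power2_eq_square field_simps)
            thus ?thesis by (simp add: add_nonneg_nonneg)
          qed
          have "k * D \<le> x^2 * (1/2 - x/3 + x^2/8) * D" using kP D0 by (intro mult_right_mono) auto
          also have "\<dots> \<le> x^2 * (1/2 - x/3 + x^2/8) * ((8*x/3 + 4) * d)"
          proof (intro mult_left_mono)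
            have "8*x/3 * 1 \<le> 8*x/3 * d" by (rule mult_left_mono) (use d1 x0 in auto)
            thus "D \<le> (8*x/3 + 4) * d" using DD by (simp add: distrib_right)
          qed (use Pn in auto)
          also have "\<dots> = x^2 * (2 - 7*x^2/18 + x^3/3) * d" by (simp add: field_simps power2_eq_square power3_eq_cube)
          also have "\<dots> \<le> x^2 * (9/4) * d"
          proof -
            have "x^3/3 - 7*x^2/18 \<le> 1/4"
            proof -
              have "x^3/3 - 7*x^2/18 = x^2 * (x/3 - 7/18)" by (simp add: power2_eq_square power3_eq_cube field_simps)
              also have "\<dots> \<le> 1/4"
              proof (cases "x/3 - 7/18 \<le> 0")
                case True
                then have "x^2 * (x/3 - 7/18) \<le> 0" by (simp add: mult_nonneg_nonpos)
                thus ?thesis by linarith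
              next
                case False
                have "x^2 \<le> (3/2)^2" by (rule power_mono) (use \<open>x \<le> 3/2\<close> x0 in auto)
                hence "x^2 * (x/3 - 7/18) \<le> (3/2)^2 * (1/9)"
                  by (intro mult_mono) (use False \<open>x \<le> 3/2\<close> in auto)
                thus ?thesis by (simp add: power2_eq_square)
              qed
              finally show ?thesis by simp
            qed
            thus ?thesis using d0 by (intro mult_right_mono mult_left_mono) auto
          qed
          also have "\<dots> \<le> x^2 * (exp 1 * d)"
          proof -
            have "(9/4) * d \<le> exp 1 * d" by (rule mult_right_mono[OF e_ge_94 d0])
            thus ?thesis by (simp add: mult.assoc mult_left_mono)
          qed
          also have "\<dots> \<le> x^2 * exp d" by (intro mult_left_mono exp_ge_e_mult) auto
          finally show ?thesis .
        next
          case False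
          have k38: "k \<le> 3*x/8" using k_38[of x] False by (simp add: k_def)
          have "k * D \<le> 3*x/8 * D" using k38 D0 by (intro mult_right_mono) auto
          also have "\<dots> = x^2 + (3*x/2) * d" by (simp add: DD field_simps power2_eq_square)
          also have "\<dots> \<le> x^2 + x^2 * d"
            using False d0 by (intro add_left_mono mult_right_mono) (auto simp: power2_eq_square)
          also have "\<dots> = x^2 * (1 + d)" by (simp add: algebra_simps)
          also have "\<dots> \<le> x^2 * exp d" by (intro mult_left_mono) auto
          finally show ?thesis .
        qed
        hence "exp (-d) * (k * D) \<le> exp (-d) * (x^2 * exp d)" by (intro mult_left_mono) auto
        also have "exp (-d) * (x^2 * exp d) = x^2" by (simp add: mult.commute[of "x^2"] mult.assoc[symmetric] flip: exp_add)
        finally have "exp (-d) * k * D \<le> x^2" by (simp add: mult.assoc)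
        thus ?thesis using D0 by (simp add: pos_le_divide_eq)
      qed
      finally show ?thesis using lhs expo by simp
    next
      case False
      define e where "e = x - m"
      have e0: "e > 0" using False by (simp add: e_def)
      have m3: "m > 3" using D8 e0 by (simp add: D_def e_def)
      have "(1 + q * (exp x - 1)) * exp (- (x * q)) \<le> (1 + q * (exp x - 1)) * 1"
        using pos1 q0 x0 by (intro mult_left_mono) auto
      also have "\<dots> \<le> 1 + exp (-m) * exp x"
      proof -
        have "q * exp x \<le> exp (-m) * exp x" by (rule mult_right_mono[OF qm]) simp
        moreover have "(1 + q * (exp x - 1)) * 1 = 1 + q * exp x - q" by (simp add: algebra_simps)
        ultimately show ?thesis using q0 by linarith
      qed
      also have "exp (-m) * exp x = exp e" by (simp add: e_def flip: exp_add)
      also have "1 + exp e \<le> 2 * exp e" using e0 by simp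
      also have "\<dots> = exp (ln 2 + e)" by (simp add: exp_add)
      also have "\<dots> \<le> exp (x^2 / D)"
      proof -
        have DD: "D = 8*m/3 - 4*e/3" by (simp add: D_def e_def field_simps)
        have xe: "x = m + e" by (simp add: e_def)
        have "(ln 2 + e) * D \<le> (1 + e) * D" using ln2_lt1 D0 by (intro mult_right_mono) auto
        also have "\<dots> \<le> x^2"
        proof -
          have "x^2 - (1 + e) * D = 7/3*(e - m/7)^2 + m*(20*m/21 - 8/3) + 4*e/3"
            by (simp add: DD xe power2_eq_square field_simps)
          moreover have "m*(20*m/21 - 8/3) \<ge> 0" using m3 by (intro mult_nonneg_nonneg) auto
          moreover have "0 \<le> 7/3*(e - m/7)^2" by simp
          ultimately show ?thesis using e0 by linarith
        qed
        finally have "ln 2 + e \<le> x^2 / D" using D0 by (simp add: field_simps)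
        thus ?thesis by simp
      qed
      finally show ?thesis using lhs expo by simp
    qed
  qed
qed

lemma mgf_relax:
  fixes r z :: real
  shows "(1 - r + r * exp z) * exp (- (z * r)) \<le> exp (r * (exp z - 1 - z))"
proof -
  have "1 - r + r * exp z \<le> exp (r * (exp z - 1))"
    using exp_ge_add_one_self[of "r * (exp z - 1)"] by (simp add: algebra_simps)
  hence "(1 - r + r * exp z) * exp (- (z * r)) \<le> exp (r * (exp z - 1)) * exp (- (z * r))"
    by (intro mult_right_mono) auto
  also have "\<dots> = exp (r * (exp z - 1 - z))" by (simp flip: exp_add add: algebra_simps)
  finally show ?thesis .
qed

lemma p_pow_le:
  fixes p :: real assumes "0 \<le> p" "p \<le> 1" "n \<ge> 1"
  shows "p * (1-p)^n \<le> 1 / (2 * real n)"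
proof -
  have n0: "real n > 0" using assms by simp
  have "p * (1-p)^n \<le> p * exp (- (real n * p))"
    using pow_le_exp[OF assms(1,2), of n] assms by (intro mult_left_mono) auto
  also have "\<dots> \<le> 1 / (2 * real n)"
  proof -
    have "2 * (real n * p) \<le> exp 1 * (real n * p)"
      using e_ge_94 assms by (intro mult_right_mono) auto
    also have "\<dots> \<le> exp (real n * p)" by (rule exp_ge_e_mult)
    finally have "2 * (real n * p) \<le> exp (real n * p)" .
    hence "p * (2 * real n) \<le> exp (real n * p)" by (simp add: algebra_simps)
    thus ?thesis using n0 by (simp add: exp_minus field_simps)
  qed
  finally show ?thesis .
qed

lemma T2_real:
  fixes p s :: real and n :: nat
  assumes p: "0 \<le> p" "p \<le> 1" and n: "n \<ge> 1" and s: "0 \<le> s"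
  shows "(1 - (1-p)^n + (1-p)^n * exp (s * (-p))) * exp (- (s * (-p) * (1-p)^n))
           \<le> exp ((p / (2*real n)) * s^2 / 2)"
proof -
  define q where "q = (1-p)^n"
  have q0: "0 \<le> q" using p by (simp add: q_def)
  have "(1 - q + q * exp (s * (-p))) * exp (- (s * (-p) * q)) \<le> exp (q * (exp (-(s*p)) - 1 - (-(s*p))))"
    using mgf_relax[of q "s * (-p)"] by simp
  also have "q * (exp (-(s*p)) - 1 - (-(s*p))) \<le> q * ((s*p)^2/2)"
    using exp_neg_upper2[of "s*p"] s p q0 by (intro mult_left_mono) auto
  also have "q * ((s*p)^2/2) = (p * q) * p * s^2 / 2" by (simp add: power2_eq_square)
  also have "\<dots> \<le> (1 / (2 * real n)) * p * s^2 / 2"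
    using p_pow_le[OF p n] p by (intro divide_right_mono mult_right_mono) (auto simp: q_def)
  also have "\<dots> = (p / (2*real n)) * s^2 / 2" by simp
  finally show ?thesis by (simp add: q_def)
qed

lemma T3_real:
  fixes p s r :: real and n :: nat
  assumes r: "0 \<le> r" "r \<le> real n * p" and n: "n \<ge> 1" and s: "0 \<le> s"
  shows "(1 - r + r * exp (s * (-(1/real n)))) * exp (- (s * (-(1/real n)) * r))
           \<le> exp ((p / real n) * s^2 / 2)"
proof -
  have n0: "real n > 0" using n by simp
  have "(1 - r + r * exp (s * (-(1/real n)))) * exp (- (s * (-(1/real n)) * r))
        \<le> exp (r * (exp (-(s/n)) - 1 - (-(s/n))))"
    using mgf_relax[of r "s * (-(1/real n))"] by simp
  also have "r * (exp (-(s/n)) - 1 - (-(s/n))) \<le> r * ((s/n)^2/2)"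
    using exp_neg_upper2[of "s/n"] s n0 r by (intro mult_left_mono) auto
  also have "\<dots> \<le> (real n * p) * ((s/n)^2/2)" using r by (intro mult_right_mono) auto
  also have "\<dots> = (p / real n) * s^2 / 2" using n0 by (simp add: power2_eq_square field_simps)
  finally show ?thesis by simp
qed

lemma T4_real:
  fixes p s r :: real and n :: nat
  assumes r: "0 \<le> r" "r \<le> real n * p" and n: "n \<ge> 1" and s: "0 \<le> s" "s < 3 * real n"
  shows "(1 - r + r * exp (s * (1/real n))) * exp (- (s * (1/real n) * r))
           \<le> exp ((p / real n) * s^2 / (2 * (1 - (1/(3*real n)) * s)))"
proof -
  have n0: "real n > 0" using n by simp
  define z where "z = s / real n"
  have z0: "0 \<le> z" "z < 3" using s n0 by (auto simp: z_def field_simps)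
  have "(1 - r + r * exp (s * (1/real n))) * exp (- (s * (1/real n) * r))
        \<le> exp (r * (exp z - 1 - z))"
    using mgf_relax[of r z] by (simp add: z_def)
  also have "r * (exp z - 1 - z) \<le> r * (z^2 / (2 * (1 - z/3)))"
  proof (intro mult_left_mono)
    have "(1 - z/3) * (exp z - 1 - z) \<le> z^2/2" by (rule bern_aux) (use z0 in auto)
    moreover have "1 - z/3 > 0" using z0 by simp
    ultimately show "exp z - 1 - z \<le> z^2 / (2 * (1 - z/3))" by (simp add: field_simps)
  qed (use r in auto)
  also have "\<dots> \<le> (real n * p) * (z^2 / (2 * (1 - z/3)))"
    using r z0 by (intro mult_right_mono) auto
  also have "\<dots> = (p / real n) * s^2 / (2 * (1 - (1/(3*real n)) * s))"
  proof -
    have den: "real n * 6 - s * 2 \<noteq> 0" "real n * 3 - s \<noteq> 0" using s by auto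
    show ?thesis using n0 den by (simp add: z_def power2_eq_square field_simps)
  qed
  finally show ?thesis by simp
qed




lemma (in prob_space) chernoff_sum:
  fixes Y :: "'i \<Rightarrow> 'a \<Rightarrow> real"
  assumes fin: "finite I" and ind: "indep_vars (\<lambda>_. borel) Y I" and s: "s > 0"
    and mgf: "\<And>i. i \<in> I \<Longrightarrow> (\<integral>\<^sup>+x. ennreal (exp (s * Y i x)) \<partial>M) \<le> ennreal (exp (\<phi> i))"
  shows "prob {x\<in>space M. t \<le> (\<Sum>i\<in>I. Y i x)} \<le> exp ((\<Sum>i\<in>I. \<phi> i) - s * t)"
proof -
  have rv: "\<And>i. i \<in> I \<Longrightarrow> random_variable borel (Y i)"
    using ind unfolding indep_vars_def by blast
  have meas: "(\<lambda>x. \<Sum>i\<in>I. Y i x) \<in> borel_measurable M"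
    by (rule borel_measurable_sum) (use rv in auto)
  have "ennreal (prob {x\<in>space M. t \<le> (\<Sum>i\<in>I. Y i x)}) = emeasure M {x\<in>space M. (\<Sum>i\<in>I. Y i x) \<ge> t}"
    by (simp add: emeasure_eq_measure)
  also have "\<dots> \<le> ennreal (exp (-s*t)) * (\<integral>\<^sup>+x. ennreal (exp (s * (\<Sum>i\<in>I. Y i x))) * indicator (space M) x \<partial>M)"
    by (intro Chernoff_ineq_nn_integral_ge s) (use meas in auto)
  also have "(\<integral>\<^sup>+x. ennreal (exp (s * (\<Sum>i\<in>I. Y i x))) * indicator (space M) x \<partial>M) =
             (\<integral>\<^sup>+x. (\<Prod>i\<in>I. ennreal (exp (s * Y i x))) \<partial>M)"
    by (intro nn_integral_cong)
       (simp_all add: sum_distrib_left exp_sum fin prod_ennreal)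
  also have "\<dots> = (\<Prod>i\<in>I. \<integral>\<^sup>+x. ennreal (exp (s * Y i x)) \<partial>M)"
    by (intro indep_vars_nn_integral fin indep_vars_compose2[OF ind]) auto
  also have "ennreal (exp (-s * t)) * \<dots> \<le> ennreal (exp (-s * t)) * (\<Prod>i\<in>I. ennreal (exp (\<phi> i)))"
    by (intro mult_left_mono prod_mono_ennreal mgf) auto
  also have "\<dots> = ennreal (exp (-s*t) * (\<Prod>i\<in>I. exp (\<phi> i)))"
    by (simp add: prod_ennreal prod_nonneg flip: ennreal_mult)
  also have "exp (-s*t) * (\<Prod>i\<in>I. exp (\<phi> i)) = exp ((\<Sum>i\<in>I. \<phi> i) - s * t)"
    by (simp add: exp_sum fin exp_diff exp_minus field_simps)
  finally show ?thesis
    by (subst (asm) ennreal_le_iff) simp_all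
qed

lemma (in prob_space) mgf_two_point:
  assumes E: "{\<omega>\<in>space M. P \<omega>} \<in> events" and r: "r = prob {\<omega>\<in>space M. P \<omega>}"
  shows "(\<integral>\<^sup>+\<omega>. ennreal (exp (s * (a * (of_bool (P \<omega>) - r)))) \<partial>M)
         = ennreal ((1 - r + r * exp (s * a)) * exp (- (s * a * r)))"
proof -
  define E' where "E' = {\<omega>\<in>space M. P \<omega>}"
  define c1 where "c1 = exp (s * (a * (1 - r)))"
  define c0 where "c0 = exp (s * (a * (0 - r)))"
  have E'[measurable]: "E' \<in> sets M" using E by (simp add: E'_def)
  have cE: "space M - E' \<in> sets M" using E' by auto
  have "(\<integral>\<^sup>+\<omega>. ennreal (exp (s * (a * (of_bool (P \<omega>) - r)))) \<partial>M)
        = (\<integral>\<^sup>+\<omega>. ennreal c1 * indicator E' \<omega> + ennreal c0 * indicator (space M - E') \<omega> \<partial>M)"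
    by (intro nn_integral_cong) (auto simp: E'_def c1_def c0_def indicator_def)
  also have "\<dots> = ennreal c1 * emeasure M E' + ennreal c0 * emeasure M (space M - E')"
    using E' cE by (simp add: nn_integral_add nn_integral_cmult_indicator)
  also have "emeasure M E' = ennreal r" using r by (simp add: E'_def emeasure_eq_measure)
  also have "emeasure M (space M - E') = ennreal (1 - r)"
    using E' r by (simp add: emeasure_eq_measure prob_compl E'_def)
  also have "ennreal c1 * ennreal r + ennreal c0 * ennreal (1 - r) = ennreal (c1 * r + c0 * (1 - r))"
  proof -
    have "0 \<le> r" "r \<le> 1" using r by auto
    thus ?thesis by (simp add: c1_def c0_def ennreal_mult ennreal_plus)
  qed
  also have "c1 * r + c0 * (1 - r) = (1 - r + r * exp (s * a)) * exp (- (s * a * r))"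
    by (simp add: c1_def c0_def algebra_simps flip: exp_add)
  finally show ?thesis .
qed

lemma (in prob_space) bernstein_tail:
  fixes Y :: "'i \<Rightarrow> 'a \<Rightarrow> real"
  assumes fin: "finite I" and ind: "indep_vars (\<lambda>_. borel) Y I" and c: "c \<ge> 0" and L: "L > 0"
    and V: "(\<Sum>i\<in>I. v i) > 0"
    and mgf: "\<And>i s. i \<in> I \<Longrightarrow> s > 0 \<Longrightarrow> c * s < 1 \<Longrightarrow>
               (\<integral>\<^sup>+x. ennreal (exp (s * Y i x)) \<partial>M) \<le> ennreal (exp (v i * s^2 / (2 * (1 - c * s))))"
  shows "prob {x\<in>space M. sqrt (2 * (\<Sum>i\<in>I. v i) * L) + c * L \<le> (\<Sum>i\<in>I. Y i x)} \<le> exp (-L)"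
proof -
  define V where "V = (\<Sum>i\<in>I. v i)"
  define x0 where "x0 = sqrt (2 * L / V)"
  define s where "s = x0 / (1 + c * x0)"
  have V0: "V > 0" using V by (simp add: V_def)
  have x00: "x0 > 0" using V0 L by (simp add: x0_def)
  have den: "1 + c * x0 > 0" using c x00 by (simp add: add_pos_nonneg)
  have s0: "s > 0" using x00 den by (simp add: s_def)
  have cs: "1 - c * s = 1 / (1 + c * x0)" using den by (simp add: s_def field_simps)
  have cs1: "c * s < 1"
  proof -
    have "1/(1+c*x0) > 0" using den by simp
    thus ?thesis using cs by linarith
  qed
  have x0sq: "x0^2 = 2 * L / V" using V0 L by (simp add: x0_def)
  have Lx: "L = V * x0^2 / 2" using x0sq V0 by (simp add: field_simps)
  have sq: "sqrt (2 * V * L) = V * x0"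
  proof -
    have "2 * V * L = (V * x0)^2" unfolding Lx by (simp add: power2_eq_square algebra_simps)
    thus ?thesis using V0 x00 by simp
  qed
  have "prob {x\<in>space M. sqrt (2 * V * L) + c * L \<le> (\<Sum>i\<in>I. Y i x)}
        \<le> exp ((\<Sum>i\<in>I. v i * s^2 / (2 * (1 - c * s))) - s * (sqrt (2 * V * L) + c * L))"
    by (rule chernoff_sum[OF fin ind s0]) (rule mgf; use s0 cs1 in auto)
  also have "(\<Sum>i\<in>I. v i * s^2 / (2 * (1 - c * s))) = V * s^2 / (2 * (1 - c * s))"
    by (simp add: V_def sum_divide_distrib sum_distrib_right)
  also have "V * s^2 / (2 * (1 - c * s)) - s * (sqrt (2 * V * L) + c * L) = -L"
  proof -
    have den': "1 + c * x0 \<noteq> 0" using den by simp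
    have key: "\<And>w. w \<noteq> 0 \<Longrightarrow> V*(x0/w)^2/(2*(1/w)) - (x0/w)*(V*x0 + (w-1)*(V*x0/2)) = -(V*x0^2/2)"
      by (simp add: field_simps power2_eq_square)
    have e1: "c * L = (1 + c * x0 - 1) * (V * x0 / 2)" unfolding Lx by (simp add: power2_eq_square)
    show ?thesis unfolding sq e1 cs unfolding s_def using key[OF den'] Lx by simp
  qed
  finally show ?thesis by (simp add: V_def)
qed




locale gt_model = prob_space M for M :: "'w measure" +
  fixes A :: "'a set" and p :: "'a \<Rightarrow> real" and X :: "nat \<Rightarrow> 'a \<Rightarrow> 'w \<Rightarrow> bool" and n :: nat
  assumes finA: "finite A"
    and prange: "\<And>u. u \<in> A \<Longrightarrow> 0 \<le> p u \<and> p u \<le> 1"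
    and indep: "indep_vars (\<lambda>_. count_space UNIV) (\<lambda>(i, u). X i u) ({1..} \<times> A)"
    and distX: "\<And>i u. i \<ge> 1 \<Longrightarrow> u \<in> A \<Longrightarrow>
           distr M (count_space UNIV) (X i u) = measure_pmf (bernoulli_pmf (p u))"
    and n1: "n \<ge> 1"
begin

lemma rvX: "i \<ge> 1 \<Longrightarrow> u \<in> A \<Longrightarrow> X i u \<in> measurable M (count_space UNIV)"
  using indep unfolding indep_vars_def by fastforce

lemma probX:
  assumes "i \<ge> 1" "u \<in> A" 
  shows "prob (X i u -` {True} \<inter> space M) = p u" "prob (X i u -` {False} \<inter> space M) = 1 - p u"
proof -
  have m: "X i u \<in> measurable M (count_space UNIV)" by (rule rvX[OF assms])
  have pr: "0 \<le> p u" "p u \<le> 1" using prange[OF assms(2)] by auto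
  have "prob (X i u -` {b} \<inter> space M) = measure (distr M (count_space UNIV) (X i u)) {b}" for b
    using m by (simp add: measure_distr)
  also have "measure (distr M (count_space UNIV) (X i u)) {b} = pmf (bernoulli_pmf (p u)) b" for b
    using distX[OF assms] by (simp add: measure_pmf_single)
  finally have *: "prob (X i u -` {b} \<inter> space M) = pmf (bernoulli_pmf (p u)) b" for b .
  show "prob (X i u -` {True} \<inter> space M) = p u" using *[of True] pr by simp
  show "prob (X i u -` {False} \<inter> space M) = 1 - p u" using *[of False] pr by simp
qed

lemma indep_fun:
  fixes G :: "'a \<Rightarrow> (nat \<Rightarrow> bool) \<Rightarrow> real" and Y :: "'a \<Rightarrow> 'w \<Rightarrow> real"
  assumes YG: "\<And>u \<omega>. u \<in> A \<Longrightarrow> Y u \<omega> = G u (restrict (\<lambda>i. X i u \<omega>) {1..n})"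
  shows "indep_vars (\<lambda>_. borel) Y A"
proof -
  define K where "K = (\<lambda>u::'a. {1..n} \<times> {u})"
  define Xf where "Xf = (\<lambda>(i, u). X i u)"
  have ind1: "indep_vars (\<lambda>u. PiM (K u) (\<lambda>_. count_space UNIV)) (\<lambda>u \<omega>. restrict (\<lambda>j. Xf j \<omega>) (K u)) A"
    by (rule indep_vars_restrict[OF indep[folded Xf_def]]) (auto simp: K_def disjoint_family_on_def)
  define H where "H = (\<lambda>u (F :: nat \<times> 'a \<Rightarrow> bool). G u (\<lambda>i\<in>{1..n}. F (i, u)))"
  have Hm: "H u \<in> measurable (PiM (K u) (\<lambda>_. count_space UNIV)) borel" for u
  proof -
    have "PiM (K u) (\<lambda>_. count_space (UNIV :: bool set)) = count_space (PiE (K u) (\<lambda>_. UNIV))"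
      by (rule count_space_PiM_finite) (auto simp: K_def)
    thus ?thesis by simp
  qed
  have ind2: "indep_vars (\<lambda>_. borel) (\<lambda>u \<omega>. H u (restrict (\<lambda>j. Xf j \<omega>) (K u))) A"
    by (rule indep_vars_compose2[OF ind1 Hm])
  show ?thesis
  proof (rule iffD1[OF indep_vars_cong ind2])
    fix u assume u: "u \<in> A"
    show "(\<lambda>\<omega>. H u (restrict (\<lambda>j. Xf j \<omega>) (K u))) = Y u"
    proof
      fix \<omega>
      have "(\<lambda>i\<in>{1..n}. restrict (\<lambda>j. Xf j \<omega>) (K u) (i, u)) = restrict (\<lambda>i. X i u \<omega>) {1..n}"
        by (rule restrict_ext) (auto simp: K_def Xf_def)
      thus "H u (restrict (\<lambda>j. Xf j \<omega>) (K u)) = Y u \<omega>" by (simp add: H_def YG[OF u])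
    qed
  qed auto
qed

lemma q_val:
  assumes u: "u \<in> A"
  shows "prob {\<omega>\<in>space M. \<forall>i\<in>{1..n}. \<not> X i u \<omega>} = (1 - p u)^n"
proof -
  define Xf where "Xf = (\<lambda>(i, u). X i u)"
  define J where "J = {1..n} \<times> {u}"
  have J: "J \<noteq> {}" "finite J" "J \<subseteq> {1..} \<times> A" using n1 u by (auto simp: J_def)
  have "prob (\<Inter>j\<in>J. Xf j -` {False} \<inter> space M) = (\<Prod>j\<in>J. prob (Xf j -` {False} \<inter> space M))"
    by (rule indep_varsD[OF indep[folded Xf_def] J]) auto
  also have "(\<Inter>j\<in>J. Xf j -` {False} \<inter> space M) = {\<omega>\<in>space M. \<forall>i\<in>{1..n}. \<not> X i u \<omega>}"
    using J(1) by (auto simp: J_def Xf_def)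
  also have "(\<Prod>j\<in>J. prob (Xf j -` {False} \<inter> space M)) = (\<Prod>j\<in>J. 1 - p u)"
    by (rule prod.cong) (auto simp: J_def Xf_def probX u)
  also have "\<dots> = (1 - p u)^n" by (simp add: J_def card_cartesian_product)
  finally show ?thesis .
qed


lemma ev_unseen: "u \<in> A \<Longrightarrow> {\<omega>\<in>space M. \<forall>i\<in>{1..n}. \<not> X i u \<omega>} \<in> events"
  by (intro predE pred_intros_finite pred_intros_logic rvX) auto

lemma ev_hapax: "u \<in> A \<Longrightarrow> {\<omega>\<in>space M. (\<Sum>i=1..n. of_bool (X i u \<omega>) :: nat) = 1} \<in> events"
proof -
  assume u: "u \<in> A"
  have "{\<omega>\<in>space M. (\<Sum>i=1..n. of_bool (X i u \<omega>) :: nat) = 1} = 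
        {\<omega>\<in>space M. \<exists>k\<in>{1..n}. X k u \<omega> \<and> (\<forall>i\<in>{1..n}. i \<noteq> k \<longrightarrow> \<not> X i u \<omega>)}"
  proof (intro Collect_cong conj_cong refl)
    fix \<omega>
    show "((\<Sum>i=1..n. of_bool (X i u \<omega>) :: nat) = 1) = (\<exists>k\<in>{1..n}. X k u \<omega> \<and> (\<forall>i\<in>{1..n}. i \<noteq> k \<longrightarrow> \<not> X i u \<omega>))"
    proof -
      have "(\<Sum>i=1..n. of_bool (X i u \<omega>) :: nat) = card ({1..n} \<inter> {i. X i u \<omega>})" by simp
      also have "\<dots> = 1 \<longleftrightarrow> (\<exists>k. {1..n} \<inter> {i. X i u \<omega>} = {k})" by (simp only: One_nat_def card_1_singleton_iff)
      also have "\<dots> \<longleftrightarrow> (\<exists>k\<in>{1..n}. X k u \<omega> \<and> (\<forall>i\<in>{1..n}. i \<noteq> k \<longrightarrow> \<not> X i u \<omega>))" by blast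
      finally show ?thesis .
    qed
  qed
  also have "\<dots> \<in> events"
    using u by (intro predE pred_intros_finite pred_intros_logic rvX) auto
  finally show ?thesis .
qed

lemma hapax_eq:
  "((\<Sum>i=1..n. of_bool (X i u \<omega>) :: nat) = 1) = (\<exists>k\<in>{1..n}. X k u \<omega> \<and> (\<forall>i\<in>{1..n}. i \<noteq> k \<longrightarrow> \<not> X i u \<omega>))"
proof -
  have "(\<Sum>i=1..n. of_bool (X i u \<omega>) :: nat) = card ({1..n} \<inter> {i. X i u \<omega>})" by simp
  also have "\<dots> = 1 \<longleftrightarrow> (\<exists>k. {1..n} \<inter> {i. X i u \<omega>} = {k})" by (simp only: One_nat_def card_1_singleton_iff)
  also have "\<dots> \<longleftrightarrow> (\<exists>k\<in>{1..n}. X k u \<omega> \<and> (\<forall>i\<in>{1..n}. i \<noteq> k \<longrightarrow> \<not> X i u \<omega>))" by blast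
  finally show ?thesis .
qed

lemma r_val:
  assumes u: "u \<in> A"
  shows "prob {\<omega>\<in>space M. (\<Sum>i=1..n. of_bool (X i u \<omega>) :: nat) = 1} = real n * p u * (1 - p u)^(n-1)"
proof -
  define Xf where "Xf = (\<lambda>(i, u). X i u)"
  define J where "J = {1..n} \<times> {u}"
  define B where "B = (\<lambda>k. {\<omega>\<in>space M. X k u \<omega> \<and> (\<forall>i\<in>{1..n}. i \<noteq> k \<longrightarrow> \<not> X i u \<omega>)})"
  define Ak where "Ak = (\<lambda>k (j :: nat \<times> 'a). if fst j = k then {True} else {False})"
  have J: "J \<noteq> {}" "finite J" "J \<subseteq> {1..} \<times> A" using n1 u by (auto simp: J_def)
  have Beq: "B k = (\<Inter>j\<in>J. Xf j -` Ak k j \<inter> space M)" if k: "k \<in> {1..n}" for k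
  proof (intro set_eqI iffI)
    fix \<omega> assume "\<omega> \<in> B k" thus "\<omega> \<in> (\<Inter>j\<in>J. Xf j -` Ak k j \<inter> space M)"
      by (auto simp: B_def J_def Xf_def Ak_def)
  next
    fix \<omega> assume h: "\<omega> \<in> (\<Inter>j\<in>J. Xf j -` Ak k j \<inter> space M)"
    have h2: "X i u \<omega> = (i = k)" if i: "i \<in> {1..n}" for i
    proof -
      have "\<omega> \<in> Xf (i,u) -` Ak k (i,u) \<inter> space M" using h i by (auto simp: J_def)
      thus ?thesis by (auto simp: Xf_def Ak_def split: if_splits)
    qed
    have "\<omega> \<in> space M" using h J(1) by auto
    thus "\<omega> \<in> B k" using h2 k by (auto simp: B_def)
  qed
  have Bev: "B k \<in> events" if k: "k \<in> {1..n}" for k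
    unfolding B_def using u k by (intro predE pred_intros_finite pred_intros_logic rvX) auto
  have PB: "prob (B k) = p u * (1 - p u)^(n-1)" if k: "k \<in> {1..n}" for k
  proof -
    have "prob (B k) = (\<Prod>j\<in>J. prob (Xf j -` Ak k j \<inter> space M))"
      unfolding Beq[OF k] by (rule indep_varsD[OF indep[folded Xf_def] J]) auto
    also have "\<dots> = (\<Prod>i\<in>{1..n}. prob (Xf (i,u) -` Ak k (i,u) \<inter> space M))"
    proof -
      have "J = (\<lambda>i. (i, u)) ` {1..n}" by (auto simp: J_def)
      moreover have "inj_on (\<lambda>i. (i, u)) {1..n}" by (auto simp: inj_on_def)
      ultimately show ?thesis by (simp add: prod.reindex)
    qed
    also have "\<dots> = (\<Prod>i\<in>{1..n}. if i = k then p u else 1 - p u)"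
      by (rule prod.cong) (auto simp: Xf_def Ak_def probX u)
    also have "\<dots> = p u * (\<Prod>i\<in>{1..n} - {k}. if i = k then p u else 1 - p u)"
      using k by (simp add: prod.remove)
    also have "(\<Prod>i\<in>{1..n} - {k}. if i = k then p u else 1 - p u) = (\<Prod>i\<in>{1..n} - {k}. 1 - p u)"
      by (rule prod.cong) auto
    also have "\<dots> = (1 - p u)^(n-1)" using k by simp
    finally show ?thesis .
  qed
  have "{\<omega>\<in>space M. (\<Sum>i=1..n. of_bool (X i u \<omega>) :: nat) = 1} = (\<Union>k\<in>{1..n}. B k)"
    unfolding hapax_eq by (auto simp: B_def)
  moreover have "prob (\<Union>k\<in>{1..n}. B k) = (\<Sum>k\<in>{1..n}. prob (B k))"
    by (rule measure_finite_Union) (use Bev in \<open>auto simp: disjoint_family_on_def B_def emeasure_finite\<close>)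
  ultimately have "prob {\<omega>\<in>space M. (\<Sum>i=1..n. of_bool (X i u \<omega>) :: nat) = 1} = (\<Sum>k\<in>{1..n}. prob (B k))"
    by simp
  also have "\<dots> = (\<Sum>k\<in>{1..n}. p u * (1 - p u)^(n-1))" by (rule sum.cong) (auto simp: PB)
  also have "\<dots> = real n * p u * (1 - p u)^(n-1)" by simp
  finally show ?thesis .
qed

lemma r_bounds:
  assumes u: "u \<in> A"
  shows "0 \<le> real n * p u * (1 - p u)^(n-1)" "real n * p u * (1 - p u)^(n-1) \<le> real n * p u"
    "real n * p u * (1 - p u)^(n-1) \<le> 1"
proof -
  have pr: "0 \<le> p u" "p u \<le> 1" using prange[OF u] by auto
  show "0 \<le> real n * p u * (1 - p u)^(n-1)" using pr by simp
  have "(1 - p u)^(n-1) \<le> 1" using pr by (simp add: power_le_one)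
  thus "real n * p u * (1 - p u)^(n-1) \<le> real n * p u" using pr by (simp add: mult_left_le)
  show "real n * p u * (1 - p u)^(n-1) \<le> 1" using r_val[OF u, symmetric] by simp
qed

lemma tail1:
  assumes L: "L > 0" and lam: "(\<Sum>u\<in>A. p u) > 0"
  shows "prob {\<omega>\<in>space M. sqrt (2 * (\<Sum>u\<in>A. p u / (2 * real n)) * L) + 1 / (3 * real n) * L
            \<le> (\<Sum>u\<in>A. p u * (unseen X n u \<omega> - (1 - p u)^n))} \<le> exp (-L)"
proof (rule bernstein_tail[OF finA, where v = "\<lambda>u. p u / (2*real n)" and c = "1/(3*real n)"
      and Y = "\<lambda>u \<omega>. p u * (unseen X n u \<omega> - (1 - p u)^n)"])
  show "indep_vars (\<lambda>_. borel) (\<lambda>u \<omega>. p u * (unseen X n u \<omega> - (1 - p u)^n)) A"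
    by (rule indep_fun[where G = "\<lambda>u f. p u * (of_bool (\<forall>i\<in>{1..n}. \<not> f i) - (1 - p u)^n)"])
       (simp add: unseen_def)
  show "0 \<le> 1/(3*real n)" by simp
  show "L > 0" by fact
  show "(\<Sum>u\<in>A. p u / (2 * real n)) > 0" using lam n1 by (simp add: sum_divide_distrib[symmetric])
  fix u s assume u: "u \<in> A" and s: "s > 0" "1/(3*real n) * s < 1"
  have pr: "0 \<le> p u" "p u \<le> 1" using prange[OF u] by auto
  have s3: "s < 3 * real n" using s n1 by (simp add: field_simps)
  have "(\<integral>\<^sup>+\<omega>. ennreal (exp (s * (p u * (unseen X n u \<omega> - (1 - p u)^n)))) \<partial>M)
     = ennreal ((1 - (1-p u)^n + (1-p u)^n * exp (s * p u)) * exp (-(s * p u * (1-p u)^n)))"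
    unfolding unseen_def by (rule mgf_two_point[OF ev_unseen[OF u] q_val[OF u, symmetric]])
  also have "\<dots> \<le> ennreal (exp (p u / (2 * real n) * s^2 / (2 * (1 - 1/(3*real n) * s))))"
    by (intro ennreal_leI T1_real pr n1) (use s s3 in auto)
  finally show "(\<integral>\<^sup>+\<omega>. ennreal (exp (s * (p u * (unseen X n u \<omega> - (1 - p u)^n)))) \<partial>M)
     \<le> ennreal (exp (p u / (2 * real n) * s^2 / (2 * (1 - 1/(3*real n) * s))))" .
qed

lemma tail2:
  assumes L: "L > 0" and lam: "(\<Sum>u\<in>A. p u) > 0"
  shows "prob {\<omega>\<in>space M. sqrt (2 * (\<Sum>u\<in>A. p u / (2 * real n)) * L) + 0 * L
            \<le> (\<Sum>u\<in>A. (- p u) * (unseen X n u \<omega> - (1 - p u)^n))} \<le> exp (-L)"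
proof (rule bernstein_tail[OF finA, where v = "\<lambda>u. p u / (2*real n)" and c = "0"
      and Y = "\<lambda>u \<omega>. (- p u) * (unseen X n u \<omega> - (1 - p u)^n)"])
  show "indep_vars (\<lambda>_. borel) (\<lambda>u \<omega>. (- p u) * (unseen X n u \<omega> - (1 - p u)^n)) A"
    by (rule indep_fun[where G = "\<lambda>u f. (- p u) * (of_bool (\<forall>i\<in>{1..n}. \<not> f i) - (1 - p u)^n)"])
       (simp add: unseen_def)
  show "0 \<le> (0::real)" by simp
  show "L > 0" by fact
  show "(\<Sum>u\<in>A. p u / (2 * real n)) > 0" using lam n1 by (simp add: sum_divide_distrib[symmetric])
  fix u s assume u: "u \<in> A" and s: "s > 0" "0 * s < (1::real)"
  have pr: "0 \<le> p u" "p u \<le> 1" using prange[OF u] by auto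
  have "(\<integral>\<^sup>+\<omega>. ennreal (exp (s * ((- p u) * (unseen X n u \<omega> - (1 - p u)^n)))) \<partial>M)
     = ennreal ((1 - (1-p u)^n + (1-p u)^n * exp (s * (- p u))) * exp (-(s * (- p u) * (1-p u)^n)))"
    unfolding unseen_def by (rule mgf_two_point[OF ev_unseen[OF u] q_val[OF u, symmetric]])
  also have "\<dots> \<le> ennreal (exp (p u / (2 * real n) * s^2 / 2))"
    by (intro ennreal_leI T2_real pr n1) (use s in auto)
  finally show "(\<integral>\<^sup>+\<omega>. ennreal (exp (s * ((- p u) * (unseen X n u \<omega> - (1 - p u)^n)))) \<partial>M)
     \<le> ennreal (exp (p u / (2 * real n) * s^2 / (2 * (1 - 0 * s))))" by simp
qed

lemma tail3:
  assumes L: "L > 0" and lam: "(\<Sum>u\<in>A. p u) > 0"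
  shows "prob {\<omega>\<in>space M. sqrt (2 * (\<Sum>u\<in>A. p u / real n) * L) + 0 * L
            \<le> (\<Sum>u\<in>A. (- (1 / real n)) * (hapax X n u \<omega> - real n * p u * (1 - p u)^(n-1)))} \<le> exp (-L)"
proof (rule bernstein_tail[OF finA, where v = "\<lambda>u. p u / real n" and c = "0"
      and Y = "\<lambda>u \<omega>. (- (1 / real n)) * (hapax X n u \<omega> - real n * p u * (1 - p u)^(n-1))"])
  show "indep_vars (\<lambda>_. borel) (\<lambda>u \<omega>. (- (1 / real n)) * (hapax X n u \<omega> - real n * p u * (1 - p u)^(n-1))) A"
    by (rule indep_fun[where G = "\<lambda>u f. (- (1 / real n)) * (of_bool ((\<Sum>i=1..n. of_bool (f i) :: nat) = 1) - real n * p u * (1 - p u)^(n-1))"])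
       (simp add: hapax_def)
  show "0 \<le> (0::real)" by simp
  show "L > 0" by fact
  show "(\<Sum>u\<in>A. p u / real n) > 0" using lam n1 by (simp add: sum_divide_distrib[symmetric])
  fix u s assume u: "u \<in> A" and s: "s > 0" "0 * s < (1::real)"
  have "(\<integral>\<^sup>+\<omega>. ennreal (exp (s * ((- (1 / real n)) * (hapax X n u \<omega> - real n * p u * (1 - p u)^(n-1))))) \<partial>M)
     = ennreal ((1 - real n * p u * (1 - p u)^(n-1) + real n * p u * (1 - p u)^(n-1) * exp (s * (- (1 / real n))))
         * exp (-(s * (- (1 / real n)) * (real n * p u * (1 - p u)^(n-1)))))"
    unfolding hapax_def by (rule mgf_two_point[OF ev_hapax[OF u] r_val[OF u, symmetric]])
  also have "\<dots> \<le> ennreal (exp (p u / real n * s^2 / 2))"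
    by (intro ennreal_leI T3_real r_bounds[OF u] n1) (use s in auto)
  finally show "(\<integral>\<^sup>+\<omega>. ennreal (exp (s * ((- (1 / real n)) * (hapax X n u \<omega> - real n * p u * (1 - p u)^(n-1))))) \<partial>M)
     \<le> ennreal (exp (p u / real n * s^2 / (2 * (1 - 0 * s))))" by simp
qed

lemma tail4:
  assumes L: "L > 0" and lam: "(\<Sum>u\<in>A. p u) > 0"
  shows "prob {\<omega>\<in>space M. sqrt (2 * (\<Sum>u\<in>A. p u / real n) * L) + 1 / (3 * real n) * L
            \<le> (\<Sum>u\<in>A. (1 / real n) * (hapax X n u \<omega> - real n * p u * (1 - p u)^(n-1)))} \<le> exp (-L)"
proof (rule bernstein_tail[OF finA, where v = "\<lambda>u. p u / real n" and c = "1/(3*real n)"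
      and Y = "\<lambda>u \<omega>. (1 / real n) * (hapax X n u \<omega> - real n * p u * (1 - p u)^(n-1))"])
  show "indep_vars (\<lambda>_. borel) (\<lambda>u \<omega>. (1 / real n) * (hapax X n u \<omega> - real n * p u * (1 - p u)^(n-1))) A"
    by (rule indep_fun[where G = "\<lambda>u f. (1 / real n) * (of_bool ((\<Sum>i=1..n. of_bool (f i) :: nat) = 1) - real n * p u * (1 - p u)^(n-1))"])
       (simp add: hapax_def)
  show "0 \<le> 1/(3*real n)" by simp
  show "L > 0" by fact
  show "(\<Sum>u\<in>A. p u / real n) > 0" using lam n1 by (simp add: sum_divide_distrib[symmetric])
  fix u s assume u: "u \<in> A" and s: "s > 0" "1/(3*real n) * s < 1"
  have s3: "s < 3 * real n" using s n1 by (simp add: field_simps)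
  have "(\<integral>\<^sup>+\<omega>. ennreal (exp (s * ((1 / real n) * (hapax X n u \<omega> - real n * p u * (1 - p u)^(n-1))))) \<partial>M)
     = ennreal ((1 - real n * p u * (1 - p u)^(n-1) + real n * p u * (1 - p u)^(n-1) * exp (s * (1 / real n)))
         * exp (-(s * (1 / real n) * (real n * p u * (1 - p u)^(n-1)))))"
    unfolding hapax_def by (rule mgf_two_point[OF ev_hapax[OF u] r_val[OF u, symmetric]])
  also have "\<dots> \<le> ennreal (exp (p u / real n * s^2 / (2 * (1 - 1/(3*real n) * s))))"
    by (intro ennreal_leI T4_real r_bounds[OF u] n1) (use s s3 in auto)
  finally show "(\<integral>\<^sup>+\<omega>. ennreal (exp (s * ((1 / real n) * (hapax X n u \<omega> - real n * p u * (1 - p u)^(n-1))))) \<partial>M)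
     \<le> ennreal (exp (p u / real n * s^2 / (2 * (1 - 1/(3*real n) * s))))" .
qed

end



context gt_model
begin

lemma unseen_meas: "u \<in> A \<Longrightarrow> unseen X n u \<in> borel_measurable M"
proof -
  assume u: "u \<in> A"
  have P: "(\<lambda>\<omega>. \<forall>i\<in>{1..n}. \<not> X i u \<omega>) \<in> measurable M (count_space UNIV)"
    using u by (intro pred_intros_finite pred_intros_logic rvX) auto
  have "(\<lambda>\<omega>. of_bool (\<forall>i\<in>{1..n}. \<not> X i u \<omega>) :: real) \<in> borel_measurable M"
    by (rule measurable_compose[OF P]) simp
  thus ?thesis by (simp add: unseen_def[abs_def])
qed

lemma hapax_meas: "u \<in> A \<Longrightarrow> hapax X n u \<in> borel_measurable M"
proof -
  assume u: "u \<in> A"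
  have P: "(\<lambda>\<omega>. (\<Sum>i=1..n. of_bool (X i u \<omega>) :: nat) = 1) \<in> measurable M (count_space UNIV)"
    using ev_hapax[OF u] by (simp only: pred_def)
  have "(\<lambda>\<omega>. of_bool ((\<Sum>i=1..n. of_bool (X i u \<omega>) :: nat) = 1) :: real) \<in> borel_measurable M"
    by (rule measurable_compose[OF P]) simp
  thus ?thesis by (simp add: hapax_def[abs_def])
qed

lemma R_meas: "remaining A p X n \<in> borel_measurable M"
proof -
  have "(\<lambda>\<omega>. \<Sum>u\<in>A. unseen X n u \<omega> * p u) \<in> borel_measurable M"
    by (rule borel_measurable_sum) (use unseen_meas in auto)
  thus ?thesis by (simp add: remaining_def[abs_def])
qed

lemma H_meas: "good_turing A X n \<in> borel_measurable M"
proof -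
  have "(\<lambda>\<omega>. \<Sum>u\<in>A. hapax X n u \<omega>) \<in> borel_measurable M"
    by (rule borel_measurable_sum) (use hapax_meas in auto)
  hence "(\<lambda>\<omega>. (1 / real n) * (\<Sum>u\<in>A. hapax X n u \<omega>)) \<in> borel_measurable M" by simp
  thus ?thesis by (simp add: good_turing_def[abs_def])
qed

end

theorem theorem1:
  fixes M :: "'w measure" and A :: "'a set" and p :: "'a \<Rightarrow> real"
    and X :: "nat \<Rightarrow> 'a \<Rightarrow> 'w \<Rightarrow> bool" and n :: nat and \<delta> :: real
  assumes "prob_space M"
    and "finite A"
    and "\<And>u. u \<in> A \<Longrightarrow> 0 \<le> p u \<and> p u \<le> 1"
    and "prob_space.indep_vars M (\<lambda>_. count_space UNIV) (\<lambda>(i, u). X i u) ({1..} \<times> A)"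
    and "\<And>i u. i \<ge> 1 \<Longrightarrow> u \<in> A \<Longrightarrow>
           distr M (count_space UNIV) (X i u) = measure_pmf (bernoulli_pmf (p u))"
    and "n \<ge> 1"
    and "0 < \<delta>" and "\<delta> < 1"
  shows "measure M {\<omega> \<in> space M.
            - beta_n (\<Sum>u\<in>A. p u) \<delta> n - (\<Sum>u\<in>A. p u) / real n
              \<le> remaining A p X n \<omega> - good_turing A X n \<omega>
            \<and> remaining A p X n \<omega> - good_turing A X n \<omega> \<le> beta_n (\<Sum>u\<in>A. p u) \<delta> n}
         \<ge> 1 - \<delta>"
proof -
  interpret gt_model M A p X n
    by (rule gt_model.intro[OF assms(1) gt_model_axioms.intro[OF assms(2) assms(3) assms(4) assms(5) assms(6)]])
  define lam where "lam = (\<Sum>u\<in>A. p u)"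
  define L where "L = ln (4 / \<delta>)"
  define R where "R = remaining A p X n"
  define H where "H = good_turing A X n"
  define good where "good = {\<omega> \<in> space M. - beta_n lam \<delta> n - lam / real n \<le> R \<omega> - H \<omega> \<and> R \<omega> - H \<omega> \<le> beta_n lam \<delta> n}"
  have n0: "real n > 0" using n1 by simp
  have d0: "0 < \<delta>" "\<delta> < 1" using assms by auto
  have L0: "L > 0" using d0 by (simp add: L_def)
  have expL: "exp (-L) = \<delta> / 4" using d0 by (simp add: L_def exp_minus)
  have pr: "\<And>u. u \<in> A \<Longrightarrow> 0 \<le> p u \<and> p u \<le> 1" by (rule prange)
  have lam0: "lam \<ge> 0" using pr by (simp add: lam_def sum_nonneg)
  have Rm[measurable]: "R \<in> borel_measurable M" by (simp add: R_def R_meas)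
  have Hm[measurable]: "H \<in> borel_measurable M" by (simp add: H_def H_meas)
  have good_ev: "good \<in> events" unfolding good_def by measurable
  have beta_pos: "beta_n lam \<delta> n > 0"
  proof -
    have "0 \<le> (1 + sqrt 2) * sqrt (lam * L / real n)" using lam0 L0 n0 by simp
    moreover have "L / (3 * real n) > 0" using L0 n0 by simp
    ultimately show ?thesis by (simp add: beta_n_def L_def[symmetric])
  qed
  have "prob good \<ge> 1 - \<delta>"
  proof (cases "lam = 0")
    case True
    have p0: "\<And>u. u \<in> A \<Longrightarrow> p u = 0"
      using True pr finA by (simp add: lam_def sum_nonneg_eq_0_iff)
    define U where "U = (\<lambda>u. {\<omega>\<in>space M. \<forall>i\<in>{1..n}. \<not> X i u \<omega>})"
    have Uev: "\<And>u. u \<in> A \<Longrightarrow> U u \<in> events" unfolding U_def by (rule ev_unseen)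
    have PU: "\<And>u. u \<in> A \<Longrightarrow> prob (U u) = 1" using q_val p0 by (simp add: U_def)
    have sub: "space M - good \<subseteq> (\<Union>u\<in>A. space M - U u)"
    proof
      fix \<omega> assume \<omega>: "\<omega> \<in> space M - good"
      show "\<omega> \<in> (\<Union>u\<in>A. space M - U u)"
      proof (rule ccontr)
        assume "\<omega> \<notin> (\<Union>u\<in>A. space M - U u)"
        hence all: "\<And>u i. u \<in> A \<Longrightarrow> i \<in> {1..n} \<Longrightarrow> \<not> X i u \<omega>" using \<omega> by (auto simp: U_def)
        have "R \<omega> = 0" using p0 by (simp add: R_def remaining_def)
        moreover have "H \<omega> = 0"
        proof -
          have "hapax X n u \<omega> = 0" if "u \<in> A" for u
            using all[OF that] by (simp add: hapax_def)
          thus ?thesis by (simp add: H_def good_turing_def)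
        qed
        ultimately have "\<omega> \<in> good" using \<omega> beta_pos True by (simp add: good_def)
        thus False using \<omega> by simp
      qed
    qed
    have "prob (space M - good) \<le> prob (\<Union>u\<in>A. space M - U u)"
    proof -
      have "(\<Union>u\<in>A. space M - U u) \<in> events" using Uev finA by (intro sets.finite_UN) auto
      thus ?thesis by (rule finite_measure_mono[OF sub])
    qed
    also have "\<dots> \<le> (\<Sum>u\<in>A. prob (space M - U u))"
      by (rule finite_measure_subadditive_finite) (use Uev finA in auto)
    also have "\<dots> = 0" using PU Uev by (simp add: prob_compl)
    finally have "prob (space M - good) \<le> 0" .
    hence "prob good \<ge> 1" using good_ev by (simp add: prob_compl)
    thus ?thesis using d0 by simp
  next
    case False
    hence lpos: "lam > 0" using lam0 by simp
    define q where "q = (\<lambda>u. (1 - p u)^n)"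
    define r where "r = (\<lambda>u. real n * p u * (1 - p u)^(n-1))"
    define cR where "cR = (\<Sum>u\<in>A. p u * q u)"
    define cH where "cH = (\<Sum>u\<in>A. r u / real n)"
    define S where "S = sqrt (lam * L / real n)"
    have S2: "sqrt (2 * (lam / real n) * L) = sqrt 2 * S"
      by (simp add: S_def real_sqrt_mult[symmetric] algebra_simps)
    have S1: "sqrt (2 * (lam / (2 * real n)) * L) = S"
      by (simp add: S_def)
    have beta: "beta_n lam \<delta> n = (1 + sqrt 2) * S + L / (3 * real n)"
      by (simp add: beta_n_def S_def L_def)
    have sum1: "(\<Sum>u\<in>A. p u / (2 * real n)) = lam / (2 * real n)" by (simp add: lam_def sum_divide_distrib)
    have sum2: "(\<Sum>u\<in>A. p u / real n) = lam / real n" by (simp add: lam_def sum_divide_distrib)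
    have f1: "(\<Sum>u\<in>A. p u * (unseen X n u \<omega> - (1 - p u)^n)) = R \<omega> - cR" for \<omega>
      by (simp add: R_def remaining_def cR_def q_def algebra_simps sum_subtractf)
    have f2: "(\<Sum>u\<in>A. (- p u) * (unseen X n u \<omega> - (1 - p u)^n)) = -(R \<omega> - cR)" for \<omega>
      by (simp add: R_def remaining_def cR_def q_def algebra_simps sum_subtractf sum_negf)
    have f3: "(\<Sum>u\<in>A. (- (1 / real n)) * (hapax X n u \<omega> - real n * p u * (1 - p u)^(n-1))) = -(H \<omega> - cH)" for \<omega>
      by (simp add: H_def good_turing_def cH_def r_def sum_distrib_left[symmetric] sum_subtractf sum_divide_distrib[symmetric] algebra_simps)
    have f4: "(\<Sum>u\<in>A. (1 / real n) * (hapax X n u \<omega> - real n * p u * (1 - p u)^(n-1))) = H \<omega> - cH" for \<omega>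
      by (simp add: H_def good_turing_def cH_def r_def sum_distrib_left[symmetric] sum_subtractf sum_divide_distrib[symmetric] algebra_simps)
    define E1 where "E1 = {\<omega>\<in>space M. S + 1 / (3 * real n) * L \<le> R \<omega> - cR}"
    define E2 where "E2 = {\<omega>\<in>space M. S + 0 * L \<le> -(R \<omega> - cR)}"
    define E3 where "E3 = {\<omega>\<in>space M. sqrt 2 * S + 0 * L \<le> -(H \<omega> - cH)}"
    define E4 where "E4 = {\<omega>\<in>space M. sqrt 2 * S + 1 / (3 * real n) * L \<le> H \<omega> - cH}"
    have P1: "prob E1 \<le> \<delta>/4" using tail1[OF L0 lpos[unfolded lam_def]]
      unfolding f1 sum1 lam_def[symmetric] S1 E1_def expL .
    have P2: "prob E2 \<le> \<delta>/4" using tail2[OF L0 lpos[unfolded lam_def]]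
      unfolding f2 sum1 lam_def[symmetric] S1 E2_def expL .
    have P3: "prob E3 \<le> \<delta>/4" using tail3[OF L0 lpos[unfolded lam_def]]
      unfolding f3 sum2 lam_def[symmetric] S2 E3_def expL .
    have P4: "prob E4 \<le> \<delta>/4" using tail4[OF L0 lpos[unfolded lam_def]]
      unfolding f4 sum2 lam_def[symmetric] S2 E4_def expL .
    have Eev: "E1 \<in> events" "E2 \<in> events" "E3 \<in> events" "E4 \<in> events"
      unfolding E1_def E2_def E3_def E4_def
      by (intro borel_measurable_le borel_measurable_const borel_measurable_diff borel_measurable_uminus Rm Hm)+
    have cdiff: "- lam / real n \<le> cR - cH \<and> cR - cH \<le> 0"
    proof -
      have each: "- (p u / real n) \<le> p u * q u - r u / real n \<and> p u * q u - r u / real n \<le> 0" if u: "u \<in> A" for u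
      proof -
        have pu: "0 \<le> p u" "p u \<le> 1" using pr[OF u] by auto
        have qq: "q u = (1 - p u) * (1 - p u)^(n-1)"
          using n1 by (simp add: q_def power_eq_if[of _ n] split: if_splits)
        have eq: "p u * q u - r u / real n = - (p u * (p u * (1 - p u)^(n-1)))"
          using n0 by (simp add: qq r_def field_simps)
        have "p u * (1 - p u)^(n-1) \<le> 1 / real n"
          using r_bounds(3)[OF u] n0 by (simp add: field_simps)
        hence "p u * (p u * (1 - p u)^(n-1)) \<le> p u * (1 / real n)" using pu by (intro mult_left_mono) auto
        moreover have "0 \<le> p u * (p u * (1 - p u)^(n-1))" using pu by simp
        ultimately show ?thesis unfolding eq by simp
      qed
      have "cR - cH = (\<Sum>u\<in>A. p u * q u - r u / real n)" by (simp add: cR_def cH_def sum_subtractf)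
      moreover have "(\<Sum>u\<in>A. - (p u / real n)) \<le> (\<Sum>u\<in>A. p u * q u - r u / real n)"
        using each by (intro sum_mono) auto
      moreover have "(\<Sum>u\<in>A. p u * q u - r u / real n) \<le> 0"
        using each by (intro sum_nonpos) auto
      moreover have "(\<Sum>u\<in>A. - (p u / real n)) = - lam / real n" by (simp add: lam_def sum_negf sum_divide_distrib)
      ultimately show ?thesis by simp
    qed
    have sub: "space M - (E1 \<union> E2 \<union> E3 \<union> E4) \<subseteq> good"
    proof
      fix \<omega> assume \<omega>: "\<omega> \<in> space M - (E1 \<union> E2 \<union> E3 \<union> E4)"
      have a1: "R \<omega> - cR < S + L / (3 * real n)" using \<omega> by (auto simp: E1_def)
      have a2: "-(R \<omega> - cR) < S" using \<omega> by (auto simp: E2_def)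
      have a3: "-(H \<omega> - cH) < sqrt 2 * S" using \<omega> by (auto simp: E3_def)
      have a4: "H \<omega> - cH < sqrt 2 * S + L / (3 * real n)" using \<omega> by (auto simp: E4_def)
      have "R \<omega> - H \<omega> \<le> beta_n lam \<delta> n" using a1 a3 cdiff by (simp add: beta algebra_simps)
      moreover have "- beta_n lam \<delta> n - lam / real n \<le> R \<omega> - H \<omega>" using a2 a4 cdiff by (simp add: beta algebra_simps)
      ultimately show "\<omega> \<in> good" using \<omega> by (simp add: good_def)
    qed
    have "prob (E1 \<union> E2 \<union> E3 \<union> E4) \<le> prob E1 + prob E2 + prob E3 + prob E4"
    proof -
      have "prob (E1 \<union> E2 \<union> E3 \<union> E4) \<le> prob (E1 \<union> E2 \<union> E3) + prob E4"
        using Eev by (intro measure_Un_le) auto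
      also have "prob (E1 \<union> E2 \<union> E3) \<le> prob (E1 \<union> E2) + prob E3"
        using Eev by (intro measure_Un_le) auto
      also have "prob (E1 \<union> E2) \<le> prob E1 + prob E2"
        using Eev by (intro measure_Un_le) auto
      finally show ?thesis by simp
    qed
    also have "\<dots> \<le> \<delta>" using P1 P2 P3 P4 by simp
    finally have PU: "prob (E1 \<union> E2 \<union> E3 \<union> E4) \<le> \<delta>" .
    have "prob (space M - (E1 \<union> E2 \<union> E3 \<union> E4)) \<le> prob good"
      by (rule finite_measure_mono[OF sub good_ev])
    moreover have "prob (space M - (E1 \<union> E2 \<union> E3 \<union> E4)) = 1 - prob (E1 \<union> E2 \<union> E3 \<union> E4)"
      using Eev by (simp add: prob_compl)
    ultimately show ?thesis using PU by simp
  qed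
  thus ?thesis by (simp add: good_def R_def H_def lam_def)
qed


end
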